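(* Every cubic graph of tree-width at most 3 contains a triangle, a copy of $K_{2,3}$, or a copy of the domino as a subgraph.
   Context: All graphs are finite and simple; cubic means 3-regular. The domino is the $2\times 3$ grid graph: vertices $a_1,a_2,a_3,b_1,b_2,b_3$ and edges $a_1a_2,a_2a_3,b_1b_2,b_2b_3,a_1b_1,a_2b_2,a_3b_3$. *)

theory Defs
  imports Main
begin

definition simple_graph :: "'a set \<Rightarrow> ('a \<Rightarrow> 'a \<Rightarrow> bool) \<Rightarrow> bool" where
  "simple_graph V E \<longleftrightarrow> finite V \<and>
     (\<forall>u v. E u v \<longrightarrow> u \<in> V \<and> v \<in> V \<and> u \<noteq> v \<and> E v u)"

definition cubic :: "'a set \<Rightarrow> ('a \<Rightarrow> 'a \<Rightarrow> bool) \<Rightarrow> bool" where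
  "cubic V E \<longleftrightarrow> (\<forall>v\<in>V. card {u \<in> V. E v u} = 3)"

definition is_walk :: "('a \<Rightarrow> 'a \<Rightarrow> bool) \<Rightarrow> 'a list \<Rightarrow> bool" where
  "is_walk E xs \<longleftrightarrow> xs \<noteq> [] \<and> (\<forall>i. Suc i < length xs \<longrightarrow> E (xs ! i) (xs ! Suc i))"

definition connected_on :: "'a set \<Rightarrow> ('a \<Rightarrow> 'a \<Rightarrow> bool) \<Rightarrow> bool" where
  "connected_on S E \<longleftrightarrow> (\<forall>u\<in>S. \<forall>v\<in>S. \<exists>xs. is_walk E xs \<and> set xs \<subseteq> S \<and>
       hd xs = u \<and> last xs = v)"

definition is_cycle :: "('a \<Rightarrow> 'a \<Rightarrow> bool) \<Rightarrow> 'a list \<Rightarrow> bool" where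
  "is_cycle E xs \<longleftrightarrow> length xs \<ge> 3 \<and> distinct xs \<and> is_walk E xs \<and> E (last xs) (hd xs)"

definition is_tree :: "'t set \<Rightarrow> ('t \<Rightarrow> 't \<Rightarrow> bool) \<Rightarrow> bool" where
  "is_tree N F \<longleftrightarrow> simple_graph N F \<and> N \<noteq> {} \<and> connected_on N F \<and>
     \<not> (\<exists>xs. is_cycle F xs)"

definition tree_decomposition ::
  "'a set \<Rightarrow> ('a \<Rightarrow> 'a \<Rightarrow> bool) \<Rightarrow> 't set \<Rightarrow> ('t \<Rightarrow> 't \<Rightarrow> bool) \<Rightarrow> ('t \<Rightarrow> 'a set) \<Rightarrow> bool" where
  "tree_decomposition V E N F B \<longleftrightarrow> is_tree N F \<and>
     (\<forall>t\<in>N. B t \<subseteq> V) \<and>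
     (\<forall>v\<in>V. \<exists>t\<in>N. v \<in> B t) \<and>
     (\<forall>u v. E u v \<longrightarrow> (\<exists>t\<in>N. u \<in> B t \<and> v \<in> B t)) \<and>
     (\<forall>v\<in>V. connected_on {t \<in> N. v \<in> B t} F)"

text \<open>Tree-width at most k: a tree decomposition all of whose bags have at most k+1
  vertices. Tree nodes are taken from nat (no loss of generality for finite trees).\<close>
definition treewidth_le :: "'a set \<Rightarrow> ('a \<Rightarrow> 'a \<Rightarrow> bool) \<Rightarrow> nat \<Rightarrow> bool" where
  "treewidth_le V E k \<longleftrightarrow> (\<exists>(N::nat set) F B. tree_decomposition V E N F B \<and>
     (\<forall>t\<in>N. card (B t) \<le> k + 1))"

definition has_triangle :: "'a set \<Rightarrow> ('a \<Rightarrow> 'a \<Rightarrow> bool) \<Rightarrow> bool" where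
  "has_triangle V E \<longleftrightarrow> (\<exists>x y z. x \<in> V \<and> y \<in> V \<and> z \<in> V \<and> distinct [x, y, z] \<and>
     E x y \<and> E y z \<and> E x z)"

definition has_K23 :: "'a set \<Rightarrow> ('a \<Rightarrow> 'a \<Rightarrow> bool) \<Rightarrow> bool" where
  "has_K23 V E \<longleftrightarrow> (\<exists>a1 a2 b1 b2 b3. {a1, a2, b1, b2, b3} \<subseteq> V \<and>
     distinct [a1, a2, b1, b2, b3] \<and>
     E a1 b1 \<and> E a1 b2 \<and> E a1 b3 \<and> E a2 b1 \<and> E a2 b2 \<and> E a2 b3)"

text \<open>Domino: 2x3 grid, edges a1a2, a2a3, b1b2, b2b3, a1b1, a2b2, a3b3.\<close>
definition has_domino :: "'a set \<Rightarrow> ('a \<Rightarrow> 'a \<Rightarrow> bool) \<Rightarrow> bool" where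
  "has_domino V E \<longleftrightarrow> (\<exists>a1 a2 a3 b1 b2 b3. {a1, a2, a3, b1, b2, b3} \<subseteq> V \<and>
     distinct [a1, a2, a3, b1, b2, b3] \<and>
     E a1 a2 \<and> E a2 a3 \<and> E b1 b2 \<and> E b2 b3 \<and> E a1 b1 \<and> E a2 b2 \<and> E a3 b3)"

end

theory Submission
  imports Defs
begin


inductive rch :: "('t \<Rightarrow> 't \<Rightarrow> bool) \<Rightarrow> 't set \<Rightarrow> 't \<Rightarrow> 't \<Rightarrow> bool" for F S u where
  rch_refl: "u \<in> S \<Longrightarrow> rch F S u u"
| rch_step: "rch F S u v \<Longrightarrow> F v w \<Longrightarrow> w \<in> S \<Longrightarrow> rch F S u w"

lemma rch_in: "rch F S u v \<Longrightarrow> u \<in> S \<and> v \<in> S"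
  by (induction rule: rch.induct) auto

lemma rch_cons: "rch F S v w \<Longrightarrow> F u v \<Longrightarrow> u \<in> S \<Longrightarrow> rch F S u w"
proof (induction rule: rch.induct)
  case rch_refl
  then show ?case using rch.rch_refl[of u S F] rch.rch_step[of F S u u v] by blast
next
  case (rch_step x y)
  then show ?case using rch.rch_step[of F S u x y] by blast
qed

lemma walk_Cons: "is_walk F (x # xs) \<longleftrightarrow> (xs = [] \<or> (F x (hd xs) \<and> is_walk F xs))"
proof (cases xs)
  case Nil
  then show ?thesis by (simp add: is_walk_def)
next
  case (Cons y ys)
  have "(\<forall>i. Suc i < length (x # xs) \<longrightarrow> F ((x # xs) ! i) ((x # xs) ! Suc i)) \<longleftrightarrow>
        F x y \<and> (\<forall>i. Suc i < length xs \<longrightarrow> F (xs ! i) (xs ! Suc i))"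
    (is "?L \<longleftrightarrow> ?R")
  proof
    assume ?L
    note L = this
    have "F x y" using L[rule_format, of 0] Cons by simp
    moreover have "\<forall>i. Suc i < length xs \<longrightarrow> F (xs ! i) (xs ! Suc i)"
    proof (intro allI impI)
      fix i assume "Suc i < length xs"
      then show "F (xs ! i) (xs ! Suc i)" using L[rule_format, of "Suc i"] by simp
    qed
    ultimately show ?R by simp
  next
    assume R: ?R
    show ?L
    proof (intro allI impI)
      fix i assume "Suc i < length (x # xs)"
      then show "F ((x # xs) ! i) ((x # xs) ! Suc i)" using R Cons
        by (cases i) auto
    qed
  qed
  then show ?thesis using Cons by (simp add: is_walk_def)
qed

lemma walk_rch: "is_walk F xs \<Longrightarrow> set xs \<subseteq> S \<Longrightarrow> rch F S (hd xs) (last xs)"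
proof (induction xs)
  case Nil
  then show ?case by (simp add: is_walk_def)
next
  case (Cons x xs)
  show ?case
  proof (cases "xs = []")
    case True
    then show ?thesis using Cons by (simp add: rch.rch_refl)
  next
    case False
    then have "F x (hd xs)" "is_walk F xs" using Cons.prems walk_Cons by metis+
    then have "rch F S (hd xs) (last xs)" using Cons by auto
    moreover have "x \<in> S" using Cons.prems by simp
    ultimately show ?thesis using False \<open>F x (hd xs)\<close> rch_cons by fastforce
  qed
qed

lemma walk_snoc: "is_walk F xs \<Longrightarrow> F (last xs) w \<Longrightarrow> is_walk F (xs @ [w])"
  unfolding is_walk_def
proof (intro conjI allI impI)
  fix i assume A: "xs \<noteq> [] \<and> (\<forall>i. Suc i < length xs \<longrightarrow> F (xs ! i) (xs ! Suc i))"
    "F (last xs) w" and i: "Suc i < length (xs @ [w])"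
  show "F ((xs @ [w]) ! i) ((xs @ [w]) ! Suc i)"
  proof (cases "Suc i < length xs")
    case True
    then show ?thesis using A by (simp add: nth_append)
  next
    case False
    then have "Suc i = length xs" using i by simp
    then have ii: "i = length xs - 1" by simp
    have "(xs @ [w]) ! i = last xs" using A ii by (simp add: nth_append last_conv_nth)
    moreover have "(xs @ [w]) ! Suc i = w" using \<open>Suc i = length xs\<close> by (simp add: nth_append)
    ultimately show ?thesis using A by simp
  qed
qed simp

lemma walk_take: "is_walk F xs \<Longrightarrow> 0 < k \<Longrightarrow> is_walk F (take k xs)"
  unfolding is_walk_def by auto

lemma rch_path: "rch F S u v \<Longrightarrow> \<exists>xs. is_walk F xs \<and> distinct xs \<and> set xs \<subseteq> S \<and> hd xs = u \<and> last xs = v"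
proof (induction rule: rch.induct)
  case rch_refl
  then show ?case by (intro exI[of _ "[u]"]) (simp add: is_walk_def)
next
  case (rch_step v w)
  then obtain xs where xs: "is_walk F xs" "distinct xs" "set xs \<subseteq> S" "hd xs = u" "last xs = v" by blast
  have ne: "xs \<noteq> []" using xs(1) by (simp add: is_walk_def)
  show ?case
  proof (cases "w \<in> set xs")
    case True
    then obtain i where i: "i < length xs" "xs ! i = w" by (metis in_set_conv_nth)
    let ?ys = "take (Suc i) xs"
    have "?ys \<noteq> []" using i ne by simp
    then have "last ?ys = ?ys ! (length ?ys - 1)" by (rule last_conv_nth)
    also have "\<dots> = w" using i by simp
    finally have "last ?ys = w" .
    moreover have "is_walk F ?ys" using walk_take xs(1) by blast
    moreover have "distinct ?ys" using xs(2) by simp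
    moreover have "set ?ys \<subseteq> S" using xs(3) by (meson order_trans set_take_subset)
    moreover have "hd ?ys = u" using xs(4) by simp
    ultimately show ?thesis by blast
  next
    case False
    have "is_walk F (xs @ [w])" using walk_snoc xs rch_step by metis
    moreover have "distinct (xs @ [w])" using False xs by simp
    moreover have "set (xs @ [w]) \<subseteq> S" using xs(3) rch_step(3) by simp
    moreover have "hd (xs @ [w]) = u" using xs(4) ne by simp
    moreover have "last (xs @ [w]) = w" by simp
    ultimately show ?thesis by blast
  qed
qed


lemma rch_cycle:
  assumes "rch F S a b" "a \<noteq> b" "c \<notin> S" "F c a" "F b c"
  shows "\<exists>ys. is_cycle F ys"
proof -
  obtain xs where xs: "is_walk F xs" "distinct xs" "set xs \<subseteq> S" "hd xs = a" "last xs = b"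
    using rch_path[OF assms(1)] by blast
  have ne: "xs \<noteq> []" using xs(1) unfolding is_walk_def by blast
  have len: "length xs \<ge> 2"
  proof (cases xs)
    case Nil then show ?thesis using ne by simp
  next
    case (Cons y ys)
    then show ?thesis using xs(4,5) assms(2) by (cases ys) auto
  qed
  have "c \<notin> set xs" using xs(3) assms(3) by blast
  moreover have "is_walk F (c # xs)" unfolding walk_Cons using xs(1,4) assms(4) ne by simp
  ultimately have "is_cycle F (c # xs)" using len xs assms(5) ne
    unfolding is_cycle_def by simp
  then show ?thesis by blast
qed

lemma list_cross: "xs \<noteq> [] \<Longrightarrow> P (hd xs) \<Longrightarrow> \<not> P (last xs) \<Longrightarrow>
  \<exists>i. Suc i < length xs \<and> P (xs ! i) \<and> \<not> P (xs ! Suc i)"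
proof (induction xs)
  case Nil
  then show ?case by simp
next
  case (Cons x xs)
  show ?case
  proof (cases "xs = []")
    case True
    then show ?thesis using Cons.prems by simp
  next
    case False
    show ?thesis
    proof (cases "P (hd xs)")
      case True
      have "\<not> P (last xs)" using Cons.prems False by simp
      then obtain i where "Suc i < length xs" "P (xs ! i)" "\<not> P (xs ! Suc i)"
        using Cons.IH False True by blast
      then show ?thesis by (intro exI[of _ "Suc i"]) simp
    next
      case f2: False
      have "(x # xs) ! Suc 0 = hd xs" using False by (simp add: hd_conv_nth)
      moreover have "P x" using Cons.prems by simp
      moreover have "Suc 0 < length (x # xs)" using False by simp
      ultimately show ?thesis using f2 by (intro exI[of _ 0]) simp
    qed
  qed
qed


locale cg =
  fixes V :: "'a set" and E :: "'a \<Rightarrow> 'a \<Rightarrow> bool"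
  assumes sg: "simple_graph V E" and cub: "cubic V E"
    and nt: "\<not> has_triangle V E" and nk: "\<not> has_K23 V E" and nd: "\<not> has_domino V E"
begin

definition nb where "nb v = {u. E v u}"

lemma finV: "finite V" using sg by (simp add: simple_graph_def)
lemma inV: "E a b \<Longrightarrow> a \<in> V \<and> b \<in> V" using sg by (simp add: simple_graph_def)
lemma sym: "E a b \<Longrightarrow> E b a" using sg by (simp add: simple_graph_def)
lemma irr: "E a b \<Longrightarrow> a \<noteq> b" using sg by (simp add: simple_graph_def)
lemma nbV: "nb v = {u \<in> V. E v u}" using inV unfolding nb_def by blast
lemma deg: "v \<in> V \<Longrightarrow> card (nb v) = 3" using cub nbV by (simp add: cubic_def)
lemma finnb: "finite (nb v)" using nbV finV by simp
lemma nbE: "u \<in> nb v \<longleftrightarrow> E v u" by (simp add: nb_def)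

lemma tri: "E v x \<Longrightarrow> E v y \<Longrightarrow> x \<noteq> y \<Longrightarrow> \<not> E x y"
proof
  assume a: "E v x" "E v y" "x \<noteq> y" "E x y"
  have V3: "x \<in> V" "y \<in> V" "v \<in> V" using inV a(1,2) by auto
  have "x \<noteq> v" "y \<noteq> v" using irr a(1,2) by auto
  then have D: "distinct [x, y, v]" using a(3) by simp
  have "E y v" "E x v" using sym a(1,2) by auto
  then have "has_triangle V E" unfolding has_triangle_def
    using V3 D a(4) by (intro exI[of _ x] exI[of _ y] exI[of _ v]) simp
  then show False using nt by simp
qed

lemma k23: "a1 \<noteq> a2 \<Longrightarrow> a1 \<in> V \<Longrightarrow> a2 \<in> V \<Longrightarrow> nb a1 = nb a2 \<Longrightarrow> False"
proof -
  assume a: "a1 \<noteq> a2" "a1 \<in> V" "a2 \<in> V" "nb a1 = nb a2"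
  have "\<exists>b1 b2 b3. nb a1 = {b1, b2, b3} \<and> b1 \<noteq> b2 \<and> b2 \<noteq> b3 \<and> b1 \<noteq> b3"
    using deg[OF a(2)] by (simp add: card_3_iff)
  then obtain b1 b2 b3 where b: "nb a1 = {b1, b2, b3}" "b1 \<noteq> b2" "b2 \<noteq> b3" "b1 \<noteq> b3"
    by blast
  have b2': "nb a2 = {b1, b2, b3}" using a(4) b(1) by simp
  have e: "E a1 b1" "E a1 b2" "E a1 b3" "E a2 b1" "E a2 b2" "E a2 b3"
    using b(1) b2' nbE by blast+
  have n1: "a1 \<noteq> b1" "a1 \<noteq> b2" "a1 \<noteq> b3" using e irr by blast+
  have n2: "a2 \<noteq> b1" "a2 \<noteq> b2" "a2 \<noteq> b3" using e irr by auto
  have "b1 \<in> V" "b2 \<in> V" "b3 \<in> V" using e inV by auto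
  then have "{a1, a2, b1, b2, b3} \<subseteq> V" using a by simp
  moreover have "distinct [a1, a2, b1, b2, b3]" using n1 n2 a(1) b(2-4) by simp
  ultimately have "has_K23 V E" unfolding has_K23_def using e
    by (intro exI[of _ a1] exI[of _ a2] exI[of _ b1] exI[of _ b2] exI[of _ b3]) simp
  then show False using nk by simp
qed

lemma small: "v \<in> V \<Longrightarrow> nb v \<subseteq> {c, d} \<Longrightarrow> False"
proof -
  assume "v \<in> V" "nb v \<subseteq> {c, d}"
  then have "card (nb v) \<le> card {c, d}" by (intro card_mono) auto
  also have "\<dots> \<le> 2" by (simp add: card_insert_if)
  finally show False using deg[OF \<open>v \<in> V\<close>] by simp
qed


lemma caseW2:
  assumes XV: "X \<subseteq> V" and X4: "card X \<le> 4" and WV: "W \<subseteq> V" and WX: "W \<inter> X = {}"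
    and WnbX: "\<forall>w\<in>W. nb w \<subseteq> X"
    and w12: "w1 \<noteq> w2" "w1 \<in> W" "w2 \<in> W"
    and x0X: "x0 \<in> X" and nbx0: "nb x0 \<subseteq> X \<union> W"
  shows False
proof -
  have finX: "finite X" using XV finV finite_subset by blast
  have x0V: "x0 \<in> V" using x0X XV by blast
  have c3: "card (nb w1) = 3" "card (nb w2) = 3" using deg w12 WV by auto
  have ne12: "nb w1 \<noteq> nb w2" using k23 w12 WV by blast
  have cX: "card X = 4"
  proof (rule ccontr)
    assume "card X \<noteq> 4"
    then have "card X \<le> 3" using X4 by simp
    moreover have "card (nb w1) \<le> card X" using WnbX w12(2) finX card_mono by blast
    ultimately have "card (nb w1) = card X" "card (nb w2) = card X" using c3 by simp_all
    moreover have "nb w1 \<subseteq> X" "nb w2 \<subseteq> X" using WnbX w12 by auto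
    ultimately have "nb w1 = X" "nb w2 = X" using card_subset_eq finX by metis+
    then show False using ne12 by simp
  qed
  have ex_e: "\<exists>e\<in>X. \<forall>y. E w y \<longleftrightarrow> (y \<in> X \<and> y \<noteq> e)" if "w \<in> W" for w
  proof -
    have sub: "nb w \<subseteq> X" using WnbX that by blast
    have "card (nb w) = 3" using deg that WV by blast
    then have "card (X - nb w) = 1" using card_Diff_subset[OF finnb sub] cX by simp
    then obtain e where e: "X - nb w = {e}" using card_1_singletonE by blast
    then have "e \<in> X" by blast
    moreover have "\<forall>y. E w y \<longleftrightarrow> (y \<in> X \<and> y \<noteq> e)"
      using e sub unfolding nb_def by blast
    ultimately show ?thesis by blast
  qed
  have diff_e: "e \<noteq> e'" if "w \<in> W" "w' \<in> W" "w \<noteq> w'"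
    "\<forall>y. E w y \<longleftrightarrow> (y \<in> X \<and> y \<noteq> e)" "\<forall>y. E w' y \<longleftrightarrow> (y \<in> X \<and> y \<noteq> e')" for w w' e e'
  proof
    assume "e = e'"
    then have "nb w = nb w'" using that unfolding nb_def by auto
    then show False using k23 that WV by blast
  qed
  obtain e1 where e1: "e1 \<in> X" "\<forall>y. E w1 y \<longleftrightarrow> (y \<in> X \<and> y \<noteq> e1)" using ex_e w12 by blast
  obtain e2 where e2: "e2 \<in> X" "\<forall>y. E w2 y \<longleftrightarrow> (y \<in> X \<and> y \<noteq> e2)" using ex_e w12 by blast
  have e12: "e1 \<noteq> e2" using diff_e w12 e1 e2 by blast
  have w12X: "w1 \<notin> X" "w2 \<notin> X" using w12 WX by blast+
  show False
  proof (cases "\<exists>w3\<in>W. w3 \<noteq> w1 \<and> w3 \<noteq> w2")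
    case True
    then obtain w3 where w3: "w3 \<in> W" "w3 \<noteq> w1" "w3 \<noteq> w2" by blast
    obtain e3 where e3: "e3 \<in> X" "\<forall>y. E w3 y \<longleftrightarrow> (y \<in> X \<and> y \<noteq> e3)" using ex_e w3 by blast
    have e3d: "e3 \<noteq> e1" "e3 \<noteq> e2" using diff_e w12 w3 e1 e2 e3 by metis+
    have w3X: "w3 \<notin> X" using w3 WX by blast
    have "\<not> X \<subseteq> {e1, e2, e3}"
    proof
      assume "X \<subseteq> {e1, e2, e3}"
      then have "card X \<le> card {e1, e2, e3}" by (intro card_mono) auto
      also have "\<dots> \<le> 3" by (simp add: card_insert_if)
      finally show False using cX by simp
    qed
    then obtain f where f: "f \<in> X" "f \<noteq> e1" "f \<noteq> e2" "f \<noteq> e3" by blast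
    have E7: "E w2 f" "E f w3" "E e3 w1" "E w1 e2" "E w2 e3" "E f w1" "E w3 e2"
      using e1 e2 e3 f e3d e12 sym by blast+
    have inX: "w2 \<in> V" "w1 \<in> V" "w3 \<in> V" "f \<in> V" "e2 \<in> V" "e3 \<in> V"
      using E7 inV by auto
    have dd: "w2 \<noteq> f" "w2 \<noteq> w3" "w2 \<noteq> e3" "w2 \<noteq> w1" "w2 \<noteq> e2"
      "f \<noteq> w3" "f \<noteq> e3" "f \<noteq> w1" "f \<noteq> e2"
      "w3 \<noteq> e3" "w3 \<noteq> w1" "w3 \<noteq> e2" "e3 \<noteq> w1" "e3 \<noteq> e2" "w1 \<noteq> e2"
      using w12 w3 w12X w3X f e3 e2 e3d by auto
    have "has_domino V E" unfolding has_domino_def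
      apply (rule exI[of _ w2], rule exI[of _ f], rule exI[of _ w3], rule exI[of _ e3],
          rule exI[of _ w1], rule exI[of _ e2])
      using E7 inX dd by simp
    then show False using nd by simp
  next
    case False
    then have Weq: "W = {w1, w2}" using w12 by blast
    have nbx: "nb x0 \<subseteq> X \<union> {w1, w2}" using nbx0 Weq by simp
    show False
    proof (cases "x0 = e1")
      case True
      have "nb x0 \<subseteq> {w2, e2}"
      proof
        fix z assume z: "z \<in> nb x0"
        then have Ez: "E x0 z" unfolding nb_def by simp
        show "z \<in> {w2, e2}"
        proof (cases "z \<in> X")
          case True
          have "z \<noteq> x0" using irr Ez by blast
          then show ?thesis using tri[of w2 x0 z] e2 True x0X Ez \<open>x0 = e1\<close> e12 by blast
        next
          case False
          then have "z = w1 \<or> z = w2" using nbx z by blast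
          moreover have "z \<noteq> w1" using e1 Ez sym \<open>x0 = e1\<close> by blast
          ultimately show ?thesis by blast
        qed
      qed
      then show False using small x0V by blast
    next
      case ne1: False
      show False
      proof (cases "x0 = e2")
        case True
        have "nb x0 \<subseteq> {w1, e1}"
        proof
          fix z assume z: "z \<in> nb x0"
          then have Ez: "E x0 z" unfolding nb_def by simp
          show "z \<in> {w1, e1}"
          proof (cases "z \<in> X")
            case True
            have "z \<noteq> x0" using irr Ez by blast
            then show ?thesis using tri[of w1 x0 z] e1 True x0X Ez \<open>x0 = e2\<close> e12 by blast
          next
            case False
            then have "z = w1 \<or> z = w2" using nbx z by blast
            moreover have "z \<noteq> w2" using e2 Ez sym \<open>x0 = e2\<close> by blast
            ultimately show ?thesis by blast
          qed
        qed
        then show False using small x0V by blast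
      next
        case ne2: False
        have "nb x0 \<subseteq> {w1, w2}"
        proof
          fix z assume z: "z \<in> nb x0"
          then have Ez: "E x0 z" unfolding nb_def by simp
          show "z \<in> {w1, w2}"
          proof (cases "z \<in> X")
            case True
            have "z \<noteq> x0" using irr Ez by blast
            have "z = e1" using tri[of w1 x0 z] e1 True x0X Ez ne1 \<open>z \<noteq> x0\<close> by blast
            moreover have "z = e2" using tri[of w2 x0 z] e2 True x0X Ez ne2 \<open>z \<noteq> x0\<close> by blast
            ultimately show ?thesis using e12 by simp
          next
            case False
            then show ?thesis using nbx z by blast
          qed
        qed
        then show False using small x0V by blast
      qed
    qed
  qed
qed


lemma caseW1:
  assumes XV: "X \<subseteq> V" and X4: "card X \<le> 4" and wV: "w \<in> V" and wX: "w \<notin> X"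
    and wnb: "nb w \<subseteq> X" and x0X: "x0 \<in> X" and nbx: "nb x0 \<subseteq> X \<union> {w}"
  shows False
proof -
  have finX: "finite X" using XV finV finite_subset by blast
  have x0V: "x0 \<in> V" using x0X XV by blast
  have "\<exists>p q r. nb w = {p, q, r} \<and> p \<noteq> q \<and> q \<noteq> r \<and> p \<noteq> r"
    using deg[OF wV] by (simp add: card_3_iff)
  then obtain p q r where pqr: "nb w = {p, q, r}" "p \<noteq> q" "q \<noteq> r" "p \<noteq> r" by blast
  have pqrX: "{p, q, r} \<subseteq> X" using wnb pqr by auto
  have c3: "card {p, q, r} = 3" using pqr by simp
  show False
  proof (cases "x0 \<in> {p, q, r}")
    case True
    have "card (X - {p, q, r}) = card X - card {p, q, r}"
      by (rule card_Diff_subset) (simp_all only: pqrX finite.emptyI finite_insert)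
    then have "card (X - {p, q, r}) \<le> Suc 0" using X4 c3 by linarith
    moreover have fin: "finite (X - {p, q, r})" using finX by (rule finite_Diff)
    ultimately have one: "\<forall>a\<in>X - {p,q,r}. \<forall>b\<in>X - {p,q,r}. a = b"
      using card_le_Suc0_iff_eq[OF fin] by blast
    obtain g where g: "X - {p, q, r} \<subseteq> {g}"
    proof (cases "X - {p, q, r} = {}")
      case True then show ?thesis using that by blast
    next
      case False
      then obtain g where "g \<in> X - {p,q,r}" by blast
      then show ?thesis using that one by blast
    qed
    have "nb x0 \<subseteq> {w, g}"
    proof
      fix z assume z: "z \<in> nb x0"
      then have Ez: "E x0 z" unfolding nb_def by simp
      have "z \<notin> {p, q, r}"
      proof
        assume zz: "z \<in> {p, q, r}"
        have "E w z" "E w x0" using zz True pqr unfolding nb_def by blast+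
        moreover have "z \<noteq> x0" using irr Ez by blast
        ultimately show False using tri Ez by blast
      qed
      then show "z \<in> {w, g}" using z nbx g by blast
    qed
    then show False using small x0V by blast
  next
    case False
    have sub0: "nb x0 \<subseteq> X - {x0}"
    proof
      fix z assume z: "z \<in> nb x0"
      then have Ez: "E x0 z" unfolding nb_def by simp
      have "z \<noteq> w"
      proof
        assume "z = w"
        then have "x0 \<in> nb w" using Ez sym unfolding nb_def by blast
        then show False using False pqr by blast
      qed
      moreover have "z \<noteq> x0" using irr Ez by blast
      ultimately show "z \<in> X - {x0}" using z nbx by blast
    qed
    have cx: "card (X - {x0}) \<le> 3" using X4 x0X finX by simp
    have sub: "{p, q, r} \<subseteq> X - {x0}" using pqrX False by blast
    have "card {p, q, r} \<le> card (X - {x0})" using card_mono[OF _ sub] finX by simp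
    then have "card {p, q, r} = card (X - {x0})" using cx c3 by simp
    then have eqpqr: "{p, q, r} = X - {x0}"
      using card_subset_eq[OF _ sub] finX by simp
    have "card (nb x0) = card (X - {x0})" using deg[OF x0V] eqpqr c3 by simp
    then have "nb x0 = X - {x0}"
      using card_subset_eq[OF _ sub0] finX by simp
    then have "nb x0 = nb w" using eqpqr pqr by simp
    moreover have "x0 \<noteq> w" using wX x0X by blast
    ultimately show False using k23 x0V wV by blast
  qed
qed

lemma caseW0:
  assumes XV: "X \<subseteq> V" and X4: "card X \<le> 4" and AX: "A \<subseteq> X" and A2: "2 \<le> card A"
    and Anb: "\<forall>a\<in>A. nb a \<subseteq> X"
  shows False
proof -
  have finX: "finite X" using XV finV finite_subset by blast
  have finA: "finite A" using AX finX finite_subset by blast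
  have "\<not> (\<forall>a\<in>A. \<forall>b\<in>A. a = b)"
    using card_le_Suc0_iff_eq[OF finA] A2 by auto
  then obtain x y where xy: "x \<in> A" "y \<in> A" "x \<noteq> y" by blast
  have full: "nb v = X - {v}" if "v \<in> A" for v
  proof -
    have vV: "v \<in> V" using that AX XV by blast
    have sub: "nb v \<subseteq> X - {v}" using Anb that irr unfolding nb_def by blast
    have "card (X - {v}) \<le> 3" using X4 that AX finX by auto
    moreover have "card (nb v) \<le> card (X - {v})" using card_mono[OF _ sub] finX by simp
    ultimately have "card (nb v) = card (X - {v})" using deg[OF vV] by simp
    then show ?thesis using card_subset_eq[OF _ sub] finX by simp
  qed
  have xV: "x \<in> V" using xy AX XV by blast
  have "card (X - {x}) = 3" using full[OF xy(1)] deg[OF xV] by simp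
  moreover have "x \<in> X" using xy AX by blast
  ultimately have cX: "card X = 4" using finX by (simp add: card_Diff_singleton_if)
  have "\<not> X \<subseteq> {x, y}"
  proof
    assume "X \<subseteq> {x, y}"
    then have "card X \<le> card {x, y}" by (intro card_mono) auto
    also have "\<dots> \<le> 2" by (simp add: card_insert_if)
    finally show False using cX by simp
  qed
  then obtain z where z: "z \<in> X" "z \<noteq> x" "z \<noteq> y" by blast
  have "y \<in> X" using xy AX by blast
  then have "E x y" "E x z" "E y z" using full xy z unfolding nb_def by blast+
  then show False using tri[of x y z] xy(3) z by blast
qed

lemma comb:
  assumes XV: "X \<subseteq> V" and X4: "card X \<le> 4"
    and AV: "A \<subseteq> V" and A2: "2 \<le> card A" and AX: "A \<inter> X \<noteq> {}"
    and HW: "\<forall>w\<in>A - X. \<forall>b. E w b \<longrightarrow> b \<in> X"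
    and HX: "\<forall>x\<in>A \<inter> X. \<forall>b. E x b \<longrightarrow> b \<in> X \<union> A"
  shows False
proof -
  define W where "W = A - X"
  have WV: "W \<subseteq> V" using AV W_def by blast
  have WnbX: "\<forall>w\<in>W. nb w \<subseteq> X" using HW W_def nb_def by blast
  have AXW: "A \<subseteq> X \<union> W" using W_def by blast
  have WX: "W \<inter> X = {}" using W_def by blast
  obtain x0 where x0: "x0 \<in> A \<inter> X" using AX by blast
  have nbx0: "nb x0 \<subseteq> X \<union> W" using HX x0 AXW unfolding nb_def by blast
  have x0X: "x0 \<in> X" using x0 by blast
  have cases: "W = {} \<or> (\<exists>w. W = {w}) \<or> (\<exists>w1 w2. w1 \<noteq> w2 \<and> w1 \<in> W \<and> w2 \<in> W)" by blast
  moreover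
  { assume "\<exists>w1 w2. w1 \<noteq> w2 \<and> w1 \<in> W \<and> w2 \<in> W"
    then obtain w1 w2 where "w1 \<noteq> w2" "w1 \<in> W" "w2 \<in> W" by blast
    then have False using caseW2[OF XV X4 WV WX WnbX _ _ _ x0X nbx0] by blast }
  moreover
  { assume "\<exists>w. W = {w}"
    then obtain w where Ww: "W = {w}" by blast
    have False using caseW1[OF XV X4, of w x0] Ww WV WX WnbX x0X nbx0 by blast }
  moreover
  { assume W0: "W = {}"
    have "A \<subseteq> X" using AXW W0 by blast
    moreover have "\<forall>a\<in>A. nb a \<subseteq> X" using HX HW W0 W_def unfolding nb_def by blast
    ultimately have False using caseW0[OF XV X4 _ A2] by blast }
  ultimately show False by blast
qed

end


locale TD =
  fixes V :: "'a set" and E :: "'a \<Rightarrow> 'a \<Rightarrow> bool"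
    and N :: "nat set" and F :: "nat \<Rightarrow> nat \<Rightarrow> bool" and B :: "nat \<Rightarrow> 'a set"
  assumes sg: "simple_graph V E"
    and td: "tree_decomposition V E N F B"
    and out: "\<forall>n. n \<notin> N \<longrightarrow> B n = {}"
begin

lemma tree: "is_tree N F" using td by (simp add: tree_decomposition_def)
lemma finN: "finite N" using tree by (simp add: is_tree_def simple_graph_def)
lemma FN: "F a b \<Longrightarrow> a \<in> N \<and> b \<in> N" using tree by (simp add: is_tree_def simple_graph_def)
lemma Fsym: "F a b \<Longrightarrow> F b a" using tree by (simp add: is_tree_def simple_graph_def)
lemma Firr: "F a b \<Longrightarrow> a \<noteq> b" using tree by (simp add: is_tree_def simple_graph_def)
lemma nocyc: "\<not> is_cycle F xs" using tree by (simp add: is_tree_def)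
lemma Nconn: "connected_on N F" using tree by (simp add: is_tree_def)
lemma BV: "B t \<subseteq> V" using td out by (cases "t \<in> N") (auto simp: tree_decomposition_def)
lemma finV: "finite V" using sg by (simp add: simple_graph_def)
lemma cover: "v \<in> V \<Longrightarrow> \<exists>t\<in>N. v \<in> B t" using td by (simp add: tree_decomposition_def)
lemma ecover: "E u v \<Longrightarrow> \<exists>t\<in>N. u \<in> B t \<and> v \<in> B t" using td by (simp add: tree_decomposition_def)
lemma vconn: "v \<in> V \<Longrightarrow> connected_on {t \<in> N. v \<in> B t} F" using td by (simp add: tree_decomposition_def)
lemma Eirr: "E a b \<Longrightarrow> a \<noteq> b" using sg by (simp add: simple_graph_def)

definition side where "side t s = {u \<in> N. rch F (N - {s}) t u}"
definition U where "U t s = (\<Union>u\<in>side t s. B u)"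
definition Aset where "Aset t s = U t s - B s"
definition ok where "ok t s \<longleftrightarrow> t \<in> N \<and> (F t s \<or> s \<notin> N)"
definition C where "C t s \<longleftrightarrow> ok t s \<and> 2 \<le> card (Aset t s) \<and> \<not> B t \<subseteq> B s"

lemma side_sub: "side t s \<subseteq> N - {s}"
  unfolding side_def using rch_in by fastforce

lemma t_side: "ok t s \<Longrightarrow> t \<in> side t s"
proof -
  assume "ok t s"
  then have "t \<in> N" "t \<noteq> s" using Firr unfolding ok_def by auto
  then show ?thesis unfolding side_def by (simp add: rch.rch_refl)
qed

lemma exit_side:
  assumes "ok t s" "m \<in> side t s" "F m n" "n \<notin> side t s"
  shows "n = s \<and> m = t"
proof -
  have nN: "n \<in> N" using FN assms(3) by blast
  have r: "rch F (N - {s}) t m" using assms(2) unfolding side_def by blast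
  have ns: "n = s"
  proof (rule ccontr)
    assume "n \<noteq> s"
    then have "rch F (N - {s}) t n" using rch.rch_step[OF r assms(3)] nN by blast
    then show False using assms(4) nN unfolding side_def by blast
  qed
  have "F t s" using assms(1) ns nN unfolding ok_def by blast
  have "m = t"
  proof (rule ccontr)
    assume "m \<noteq> t"
    have "\<exists>ys. is_cycle F ys"
      using rch_cycle[OF r, of s] \<open>m \<noteq> t\<close> \<open>F t s\<close> Fsym assms(3) ns by blast
    then show False using nocyc by blast
  qed
  then show ?thesis using ns by blast
qed

lemma cross_node:
  assumes "ok t s" "u \<in> side t s" "v \<in> N" "v \<notin> side t s" "a \<in> B u" "a \<in> B v"
  shows "a \<in> B t \<and> a \<in> B s"
proof -
  have aV: "a \<in> V" using assms(5) BV by blast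
  have uN: "u \<in> N" using assms(2) side_sub by blast
  obtain xs where xs: "is_walk F xs" "set xs \<subseteq> {n \<in> N. a \<in> B n}" "hd xs = u" "last xs = v"
    using vconn[OF aV] uN assms(3,5,6) unfolding connected_on_def by blast
  have ne: "xs \<noteq> []" using xs(1) by (simp add: is_walk_def)
  obtain i where i: "Suc i < length xs" "xs ! i \<in> side t s" "xs ! Suc i \<notin> side t s"
    using list_cross[OF ne, of "\<lambda>n. n \<in> side t s"] xs(3,4) assms(2,4) by blast
  have "F (xs ! i) (xs ! Suc i)" using xs(1) i(1) by (simp add: is_walk_def)
  then have "xs ! Suc i = s \<and> xs ! i = t" using exit_side[OF assms(1) i(2)] i(3) by blast
  moreover have "xs ! i \<in> set xs" "xs ! Suc i \<in> set xs" using i(1) by simp_all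
  ultimately show ?thesis using xs(2) by auto
qed

lemma F1: "ok t s \<Longrightarrow> a \<in> U t s \<Longrightarrow> a \<in> B s \<Longrightarrow> a \<in> B t"
proof -
  assume a: "ok t s" "a \<in> U t s" "a \<in> B s"
  then obtain u where u: "u \<in> side t s" "a \<in> B u" unfolding U_def by blast
  have "s \<in> N" using a(3) out by blast
  moreover have "s \<notin> side t s" using side_sub by blast
  ultimately show ?thesis using cross_node[OF a(1) u(1) _ _ u(2) a(3)] by blast
qed

lemma F2: "ok t s \<Longrightarrow> a \<in> Aset t s \<Longrightarrow> E a b \<Longrightarrow> b \<in> Aset t s \<or> b \<in> B t"
proof -
  assume a: "ok t s" "a \<in> Aset t s" "E a b"
  obtain n where n: "n \<in> N" "a \<in> B n" "b \<in> B n" using ecover[OF a(3)] by blast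
  obtain u where u: "u \<in> side t s" "a \<in> B u" using a(2) unfolding Aset_def U_def by blast
  have "n \<in> side t s"
  proof (rule ccontr)
    assume "n \<notin> side t s"
    then have "a \<in> B s" using cross_node[OF a(1) u(1) n(1) _ u(2) n(2)] by blast
    then show False using a(2) unfolding Aset_def by blast
  qed
  then have "b \<in> U t s" using n(3) unfolding U_def by blast
  then show ?thesis using F1[OF a(1)] unfolding Aset_def by blast
qed

lemma F2s: "ok t s \<Longrightarrow> a \<in> Aset t s \<Longrightarrow> E a b \<Longrightarrow> b \<in> Aset t s \<or> b \<in> B s"
proof -
  assume a: "ok t s" "a \<in> Aset t s" "E a b"
  obtain n where n: "n \<in> N" "a \<in> B n" "b \<in> B n" using ecover[OF a(3)] by blast
  obtain u where u: "u \<in> side t s" "a \<in> B u" using a(2) unfolding Aset_def U_def by blast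
  have "n \<in> side t s"
  proof (rule ccontr)
    assume "n \<notin> side t s"
    then have "a \<in> B s" using cross_node[OF a(1) u(1) n(1) _ u(2) n(2)] by blast
    then show False using a(2) unfolding Aset_def by blast
  qed
  then have "b \<in> U t s" using n(3) unfolding U_def by blast
  then show ?thesis unfolding Aset_def by blast
qed

lemma child_sub:
  assumes "ok t s" "F t t'" "t' \<noteq> s"
  shows "side t' t \<subseteq> side t s"
proof
  fix u assume "u \<in> side t' t"
  then have r: "rch F (N - {t}) t' u" unfolding side_def by blast
  have "u \<noteq> s \<and> rch F (N - {s}) t u" using r
  proof (induction rule: rch.induct)
    case rch_refl
    have "t \<in> side t s" using t_side[OF assms(1)] .
    then have "rch F (N - {s}) t t" unfolding side_def by blast
    moreover have "t' \<in> N" using FN assms(2) by blast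
    moreover have "t' \<in> N - {s}" using \<open>t' \<in> N\<close> assms(3) by blast
    ultimately have "rch F (N - {s}) t t'" using rch.rch_step[of F "N - {s}" t t t'] assms(2) by blast
    then show ?case using rch_refl assms(3) by simp
  next
    case (rch_step y x)
    have "y \<in> N - {t}" using rch_in[OF rch_step.hyps(1)] by blast
    have "x \<noteq> s"
    proof
      assume "x = s"
      have "y \<in> side t s" using rch_step.IH \<open>y \<in> N - {t}\<close> unfolding side_def by blast
      moreover have "s \<notin> side t s" using side_sub by blast
      ultimately have "y = t" using exit_side[OF assms(1)] rch_step.hyps(2) \<open>x = s\<close> by blast
      then show False using \<open>y \<in> N - {t}\<close> by blast
    qed
    moreover have "x \<in> N - {s}" using rch_step.hyps(3) \<open>x \<noteq> s\<close> by blast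
    ultimately show ?case using rch.rch_step[OF conjunct2[OF rch_step.IH] rch_step.hyps(2)]
      by blast
  qed
  then show "u \<in> side t s" unfolding side_def using rch_in[OF r] by blast
qed

lemma child_less:
  assumes "ok t s" "F t t'" "t' \<noteq> s"
  shows "card (side t' t) < card (side t s)"
proof (rule psubset_card_mono)
  show "finite (side t s)" using side_sub finN finite_subset by blast
  have "t \<notin> side t' t" using side_sub by blast
  then show "side t' t \<subset> side t s" using child_sub[OF assms] t_side[OF assms(1)] by blast
qed

lemma child_ok: "ok t s \<Longrightarrow> F t t' \<Longrightarrow> ok t' t"
  unfolding ok_def using FN Fsym by blast

lemma decomp: "rch F (N - {s}) t u \<Longrightarrow> u = t \<or> (\<exists>t'. F t t' \<and> t' \<noteq> s \<and> rch F (N - {t}) t' u)"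
proof (induction rule: rch.induct)
  case rch_refl
  then show ?case by simp
next
  case (rch_step v w)
  show ?case
  proof (cases "w = t")
    case True then show ?thesis by simp
  next
    case wt: False
    show ?thesis
    proof (cases "v = t")
      case True
      then have "rch F (N - {t}) w w" using rch_step.hyps(3) wt by (simp add: rch.rch_refl)
      then show ?thesis using True rch_step.hyps(2,3) by blast
    next
      case False
      then obtain t' where "F t t'" "t' \<noteq> s" "rch F (N - {t}) t' v" using rch_step.IH by blast
      moreover have "w \<in> N - {t}" using rch_step.hyps(3) wt by blast
      ultimately show ?thesis using rch.rch_step[of F "N - {t}" t' v w] rch_step.hyps(2) by blast
    qed
  qed
qed

lemma Aset_child:
  assumes "ok t s" "a \<in> Aset t s" "a \<notin> B t"
  shows "\<exists>t'. F t t' \<and> t' \<noteq> s \<and> a \<in> Aset t' t"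
proof -
  obtain u where u: "u \<in> side t s" "a \<in> B u" using assms(2) unfolding Aset_def U_def by blast
  have "u \<noteq> t" using u assms(3) by blast
  then obtain t' where t': "F t t'" "t' \<noteq> s" "rch F (N - {t}) t' u"
    using decomp u(1) unfolding side_def by blast
  have "u \<in> side t' t" using t'(3) u(1) unfolding side_def by blast
  then have "a \<in> Aset t' t" using u(2) assms(3) unfolding Aset_def U_def by blast
  then show ?thesis using t' by blast
qed

lemma finAset: "finite (Aset t s)"
proof -
  have "Aset t s \<subseteq> V" unfolding Aset_def U_def using BV by blast
  then show ?thesis using finV finite_subset by blast
qed

lemma lemI:
  assumes minC: "\<forall>t s. C t s \<longrightarrow> m \<le> card (side t s)"
  shows "ok u p \<Longrightarrow> card (side u p) \<le> m \<Longrightarrow> a \<in> Aset u p \<Longrightarrow> a \<notin> B u \<Longrightarrow> E a b \<Longrightarrow> b \<in> B u"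
proof (induction "card (side u p)" arbitrary: u p a b rule: less_induct)
  case less
  obtain u' where u': "F u u'" "u' \<noteq> p" "a \<in> Aset u' u" using Aset_child[OF less.prems(1,3,4)] by blast
  have ok': "ok u' u" using child_ok[OF less.prems(1) u'(1)] .
  have lt: "card (side u' u) < card (side u p)" using child_less[OF less.prems(1) u'(1,2)] .
  then have "\<not> C u' u" using minC less.prems(2) by fastforce
  then have "card (Aset u' u) < 2 \<or> B u' \<subseteq> B u" using ok' unfolding C_def by auto
  then show ?case
  proof
    assume c: "card (Aset u' u) < 2"
    have "b \<in> Aset u' u \<or> b \<in> B u" using F2s[OF ok' u'(3) less.prems(5)] .
    moreover have "b \<notin> Aset u' u"
    proof
      assume "b \<in> Aset u' u"
      moreover have "a \<noteq> b" using Eirr less.prems(5) by blast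
      ultimately have "card {a, b} \<le> card (Aset u' u)" using u'(3) finAset by (intro card_mono) auto
      then show False using c \<open>a \<noteq> b\<close> by simp
    qed
    ultimately show ?thesis by blast
  next
    assume sub: "B u' \<subseteq> B u"
    have "a \<notin> B u'" using sub less.prems(4) by blast
    then have "b \<in> B u'" using less.hyps[OF lt ok' _ u'(3) _ less.prems(5)] lt less.prems(2) by simp
    then show ?thesis using sub by blast
  qed
qed

end


lemma main_contra:
  assumes td: "TD V E N F B" and cgr: "cg V E" and Vne: "V \<noteq> {}"
    and w4: "\<forall>t\<in>N. card (B t) \<le> 4" and s0: "s0 \<notin> N"
  shows False
proof -
  interpret TD V E N F B by (rule td)
  interpret cg V E by (rule cgr)
  obtain v where vV: "v \<in> V" using Vne by blast
  obtain r where r: "r \<in> N" "v \<in> B r" using cover[OF vV] by blast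
  have sideN: "side r s0 = N"
  proof
    show "side r s0 \<subseteq> N" using side_sub by blast
    show "N \<subseteq> side r s0"
    proof
      fix n assume n: "n \<in> N"
      obtain xs where xs: "is_walk F xs" "set xs \<subseteq> N" "hd xs = r" "last xs = n"
        using Nconn r(1) n unfolding connected_on_def by blast
      have "rch F N r n" using walk_rch[OF xs(1,2)] xs(3,4) by simp
      moreover have "N - {s0} = N" using s0 by blast
      ultimately show "n \<in> side r s0" using n unfolding side_def by simp
    qed
  qed
  have okr: "ok r s0" using r s0 unfolding ok_def by blast
  have Bs0: "B s0 = {}" using out s0 by blast
  have "nb v \<subseteq> Aset r s0"
  proof
    fix b assume "b \<in> nb v"
    then have "E v b" by (simp add: nbE)
    then obtain n where "n \<in> N" "b \<in> B n" using ecover by blast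
    then show "b \<in> Aset r s0" unfolding Aset_def U_def using sideN Bs0 by blast
  qed
  then have "card (nb v) \<le> card (Aset r s0)" using finAset by (rule card_mono[rotated])
  then have "2 \<le> card (Aset r s0)" using deg[OF vV] by simp
  then have Cr: "C r s0" unfolding C_def using okr r(2) Bs0 by blast
  obtain p where p: "C (fst p) (snd p)"
      "\<forall>q. C (fst q) (snd q) \<longrightarrow> card (side (fst p) (snd p)) \<le> card (side (fst q) (snd q))"
    using ex_has_least_nat[of "\<lambda>p. C (fst p) (snd p)" "(r, s0)" "\<lambda>p. card (side (fst p) (snd p))"] Cr
    by auto
  define t where "t = fst p"
  define s where "s = snd p"
  have Cts: "C t s" using p(1) t_def s_def by simp
  have minC: "\<forall>t' s'. C t' s' \<longrightarrow> card (side t s) \<le> card (side t' s')"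
  proof (intro allI impI)
    fix t' s' assume "C t' s'"
    then show "card (side t s) \<le> card (side t' s')" using p(2)[rule_format, of "(t', s')"] t_def s_def by simp
  qed
  have okts: "ok t s" using Cts unfolding C_def by blast
  have tN: "t \<in> N" using okts unfolding ok_def by blast
  show False
  proof (rule comb[of "B t" "Aset t s"])
    show "B t \<subseteq> V" by (rule BV)
    show "card (B t) \<le> 4" using w4 tN by blast
    show "Aset t s \<subseteq> V" unfolding Aset_def U_def using BV by blast
    show "2 \<le> card (Aset t s)" using Cts unfolding C_def by blast
    show "Aset t s \<inter> B t \<noteq> {}"
    proof -
      obtain x where "x \<in> B t" "x \<notin> B s" using Cts unfolding C_def by blast
      moreover have "t \<in> side t s" using t_side[OF okts] .
      ultimately have "x \<in> Aset t s" unfolding Aset_def U_def by blast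
      then show ?thesis using \<open>x \<in> B t\<close> by blast
    qed
    show "\<forall>w\<in>Aset t s - B t. \<forall>b. E w b \<longrightarrow> b \<in> B t"
      using lemI[OF minC okts le_refl] by blast
    show "\<forall>x\<in>Aset t s \<inter> B t. \<forall>b. E x b \<longrightarrow> b \<in> B t \<union> Aset t s"
      using F2[OF okts] by blast
  qed
qed

theorem lemma28:
  fixes V :: "'a set" and E :: "'a \<Rightarrow> 'a \<Rightarrow> bool"
  assumes "simple_graph V E" and "V \<noteq> {}" and "cubic V E" and "treewidth_le V E 3"
  shows "has_triangle V E \<or> has_K23 V E \<or> has_domino V E"
proof (rule ccontr)
  assume neg: "\<not> (has_triangle V E \<or> has_K23 V E \<or> has_domino V E)"
  then have cgr: "cg V E" using assms(1,3) by unfold_locales auto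
  obtain N :: "nat set" and F B where tdec: "tree_decomposition V E N F B"
    and w: "\<forall>t\<in>N. card (B t) \<le> 3 + 1"
    using assms(4) unfolding treewidth_le_def by blast
  define B' where "B' = (\<lambda>n. if n \<in> N then B n else {})"
  have eqN: "{t \<in> N. v \<in> B' t} = {t \<in> N. v \<in> B t}" for v unfolding B'_def by auto
  have tdec': "tree_decomposition V E N F B'"
    using tdec unfolding tree_decomposition_def eqN by (simp add: B'_def)
  have "TD V E N F B'"
    by unfold_locales (use assms(1) tdec' in \<open>auto simp: B'_def\<close>)
  moreover have "\<forall>t\<in>N. card (B' t) \<le> 4" using w by (simp add: B'_def)
  moreover have "finite N" using tdec unfolding tree_decomposition_def is_tree_def simple_graph_def by blast
  then obtain s0 :: nat where "s0 \<notin> N" using ex_new_if_finite[OF infinite_UNIV_nat] by blast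
  ultimately show False using main_contra cgr assms(2) by blast
qed


end
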